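(* Let $D_5$ be the undirected tree with vertices $v,a,b,c,d$ and edges $va,vb,vc,cd$. Every finite connected undirected graph without loops, without multiple edges, and without subgraphs isomorphic to $D_5$ is one of the following: a cycle with $l\ge 3$ vertices; a path (chain) with $l\ge 0$ edges; a star $K_{1,l}$ with $l\ge 3$ edges; or a connected graph with four vertices.
   Context: "Subgraph" means an arbitrary (not necessarily induced) subgraph. *)

theory Defs
  imports Main
begin

definition simple_graph :: "'a set \<Rightarrow> ('a \<Rightarrow> 'a \<Rightarrow> bool) \<Rightarrow> bool" where
  "simple_graph V E \<longleftrightarrow> finite V \<and> (\<forall>x y. E x y \<longrightarrow> x \<in> V \<and> y \<in> V)
     \<and> (\<forall>x y. E x y \<longrightarrow> E y x) \<and> (\<forall>x. \<not> E x x)"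

definition connected_graph :: "'a set \<Rightarrow> ('a \<Rightarrow> 'a \<Rightarrow> bool) \<Rightarrow> bool" where
  "connected_graph V E \<longleftrightarrow> V \<noteq> {} \<and> (\<forall>x\<in>V. \<forall>y\<in>V. E\<^sup>*\<^sup>* x y)"

definition graph_iso :: "'a set \<Rightarrow> ('a \<Rightarrow> 'a \<Rightarrow> bool) \<Rightarrow> 'b set \<Rightarrow> ('b \<Rightarrow> 'b \<Rightarrow> bool) \<Rightarrow> bool" where
  "graph_iso V E W F \<longleftrightarrow> (\<exists>f. bij_betw f V W \<and> (\<forall>x\<in>V. \<forall>y\<in>V. E x y \<longleftrightarrow> F (f x) (f y)))"

definition has_subgraph_iso :: "'a set \<Rightarrow> ('a \<Rightarrow> 'a \<Rightarrow> bool) \<Rightarrow> 'b set \<Rightarrow> ('b \<Rightarrow> 'b \<Rightarrow> bool) \<Rightarrow> bool" where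
  "has_subgraph_iso V E W F \<longleftrightarrow> (\<exists>f. inj_on f W \<and> f ` W \<subseteq> V \<and> (\<forall>x\<in>W. \<forall>y\<in>W. F x y \<longrightarrow> E (f x) (f y)))"

text \<open>The tree D5: v=0, a=1, b=2, c=3, d=4, edges va, vb, vc, cd.\<close>
definition D5_V :: "nat set" where "D5_V = {0..4}"
definition D5_E :: "nat \<Rightarrow> nat \<Rightarrow> bool" where
  "D5_E x y \<longleftrightarrow> {x, y} = {0, 1} \<or> {x, y} = {0, 2} \<or> {x, y} = {0, 3} \<or> {x, y} = {3, 4}"

definition cycle_V :: "nat \<Rightarrow> nat set" where "cycle_V l = {0..<l}"
definition cycle_E :: "nat \<Rightarrow> nat \<Rightarrow> nat \<Rightarrow> bool" where
  "cycle_E l x y \<longleftrightarrow> x < l \<and> y < l \<and> (y = (x + 1) mod l \<or> x = (y + 1) mod l)"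

definition path_V :: "nat \<Rightarrow> nat set" where "path_V l = {0..l}"
definition path_E :: "nat \<Rightarrow> nat \<Rightarrow> nat \<Rightarrow> bool" where
  "path_E l x y \<longleftrightarrow> x \<le> l \<and> y \<le> l \<and> (y = x + 1 \<or> x = y + 1)"

definition star_V :: "nat \<Rightarrow> nat set" where "star_V l = {0..l}"
definition star_E :: "nat \<Rightarrow> nat \<Rightarrow> nat \<Rightarrow> bool" where
  "star_E l x y \<longleftrightarrow> x \<le> l \<and> y \<le> l \<and> ((x = 0 \<and> y \<noteq> 0) \<or> (y = 0 \<and> x \<noteq> 0))"

end

theory Submission
  imports Defs
begin

lemma two_elems:
  assumes "card A \<ge> 2" shows "\<exists>x y. x \<in> A \<and> y \<in> A \<and> x \<noteq> y"
proof -
  from assms have "Suc (Suc 0) \<le> card A" by simp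
  then obtain a B where "A = insert a B" "a \<notin> B" "Suc 0 \<le> card B" "finite B"
    using card_le_Suc_iff by metis
  then obtain b C where "B = insert b C" using card_le_Suc_iff by metis
  then show ?thesis using \<open>A = insert a B\<close> \<open>a \<notin> B\<close> by blast
qed

lemma iso_from_enum:
  assumes "bij_betw g A V" "\<forall>i\<in>A. \<forall>j\<in>A. E (g i) (g j) \<longleftrightarrow> F i j"
  shows "graph_iso V E A F"
proof -
  let ?f = "the_inv_into A g"
  have inj: "inj_on g A" and im: "g ` A = V" using assms(1) unfolding bij_betw_def by blast+
  have "bij_betw ?f V A" using bij_betw_the_inv_into[OF assms(1)] .
  moreover have "\<forall>x\<in>V. \<forall>y\<in>V. E x y \<longleftrightarrow> F (?f x) (?f y)"
  proof (intro ballI)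
    fix x y assume xy: "x\<in>V" "y\<in>V"
    then have xi: "x \<in> g ` A" and yi: "y \<in> g ` A" using im by simp_all
    have x: "g (?f x) = x" by (rule f_the_inv_into_f[OF inj xi])
    have y: "g (?f y) = y" by (rule f_the_inv_into_f[OF inj yi])
    have "?f x \<in> A" by (rule the_inv_into_into[OF inj xi]) simp
    moreover have "?f y \<in> A" by (rule the_inv_into_into[OF inj yi]) simp
    ultimately have "E (g (?f x)) (g (?f y)) \<longleftrightarrow> F (?f x) (?f y)" using assms(2) by blast
    then show "E x y \<longleftrightarrow> F (?f x) (?f y)" unfolding x y .
  qed
  ultimately show ?thesis unfolding graph_iso_def by blast
qed

lemma closed_all:
  assumes "connected_graph V E" "v \<in> V" "v \<in> S" "\<And>x y. x \<in> S \<Longrightarrow> E x y \<Longrightarrow> y \<in> S"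
  shows "V \<subseteq> S"
proof
  fix y assume "y\<in>V"
  then have "E\<^sup>*\<^sup>* v y" using assms(1,2) unfolding connected_graph_def by simp
  then show "y \<in> S"
  proof (induction rule: rtranclp_induct)
    case base show ?case using assms(3) .
  next
    case (step y z) then show ?case using assms(4) by blast
  qed
qed

lemma D5_E_iff:
  "D5_E x y \<longleftrightarrow> (x = 0 \<and> y = 1) \<or> (x = 1 \<and> y = 0) \<or> (x = 0 \<and> y = 2) \<or> (x = 2 \<and> y = 0)
     \<or> (x = 0 \<and> y = 3) \<or> (x = 3 \<and> y = 0) \<or> (x = 3 \<and> y = 4) \<or> (x = 4 \<and> y = 3)"
  unfolding D5_E_def doubleton_eq_iff by auto

lemma D5_found:
  assumes "simple_graph V E" "E v a" "E v b" "E v c" "E c d"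
    "v \<noteq> a" "v \<noteq> b" "v \<noteq> c" "v \<noteq> d" "a \<noteq> b" "a \<noteq> c" "a \<noteq> d" "b \<noteq> c" "b \<noteq> d" "c \<noteq> d"
  shows "has_subgraph_iso V E D5_V D5_E"
proof -
  have inV: "\<And>x y. E x y \<Longrightarrow> x\<in>V \<and> y \<in> V" and sym: "\<And>x y. E x y \<Longrightarrow> E y x"
    using assms(1) unfolding simple_graph_def by blast+
  define f where "f = (\<lambda>i::nat. if i=0 then v else if i=1 then a else if i=2 then b else if i=3 then c else d)"
  have D: "D5_V = {0,1,2,3,4}" unfolding D5_V_def by (simp add: atLeast0_atMost_Suc numeral_eq_Suc insert_commute)
  have i1: "inj_on f {0,1,2,3,4}" unfolding inj_on_def f_def using assms(6-) by simp
  have i2: "f ` {0,1,2,3,4} \<subseteq> V" unfolding f_def using inV assms(2-5) by simp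
  have i3: "\<forall>x\<in>{0,1,2,3,4}. \<forall>y\<in>{0,1,2,3,4}. D5_E x y \<longrightarrow> E (f x) (f y)"
    unfolding D5_E_iff f_def using assms(2-5) sym[OF assms(2)] sym[OF assms(3)] sym[OF assms(4)] sym[OF assms(5)] by simp
  show ?thesis unfolding has_subgraph_iso_def D
    by (rule exI[of _ f], intro conjI i1 i2 i3)
qed

lemma star_case:
  assumes sg: "simple_graph V E" and cg: "connected_graph V E" and c4: "card V \<noteq> 4"
    and noD: "\<not> has_subgraph_iso V E D5_V D5_E"
    and e: "E v a" "E v b" "E v c" and dist: "a \<noteq> b" "a \<noteq> c" "b \<noteq> c"
  shows "\<exists>l\<ge>3. graph_iso V E (star_V l) (star_E l)"
proof -
  have fin: "finite V" and sym: "\<And>x y. E x y \<Longrightarrow> E y x" and irr: "\<And>x. \<not>E x x"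
    and inV: "\<And>x y. E x y \<Longrightarrow> x\<in>V \<and> y \<in> V" using sg unfolding simple_graph_def by blast+
  have symE: "\<And>x y. E x y \<longleftrightarrow> E y x" using sym by blast
  define N where "N = {x. E v x}"
  have NV: "N \<subseteq> V" using inV N_def by auto
  have finN: "finite N" using NV fin finite_subset by blast
  have vN: "v \<notin> N" using irr N_def by auto
  have case1: "\<forall>u d. E v u \<and> E u d \<and> d \<noteq> v \<longrightarrow> E v d"
  proof (intro allI impI, rule ccontr)
    fix u d assume h: "E v u \<and> E u d \<and> d \<noteq> v" and nd: "\<not> E v d"
    have "u \<noteq> d" "v \<noteq> u" using irr h by auto
    have "\<exists>a' b'. E v a' \<and> E v b' \<and> a' \<noteq> b' \<and> a' \<noteq> u \<and> b' \<noteq> u"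
      using e dist by metis
    then obtain a' b' where ab: "E v a'" "E v b'" "a' \<noteq> b'" "a' \<noteq> u" "b' \<noteq> u" by blast
    have "has_subgraph_iso V E D5_V D5_E"
      apply (rule D5_found[OF sg ab(1) ab(2), of u d])
      using h nd ab irr \<open>u \<noteq> d\<close> by metis+
    then show False using noD by blast
  qed
  have vV: "v \<in> V" using inV e by blast
  have Veq: "V = insert v N"
  proof
    show "V \<subseteq> insert v N"
      apply (rule closed_all[OF cg vV])
      using case1 N_def by auto
    show "insert v N \<subseteq> V" using NV vV by blast
  qed
  have cV: "card V = Suc (card N)" using Veq vN finN by simp
  have "{a,b,c} \<subseteq> N" using e N_def by auto
  then have "card {a,b,c} \<le> card N" using finN card_mono by blast
  then have "card N \<ge> 3" using dist by simp
  then have cN: "card N \<ge> 4" using c4 cV by simp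
  have noin: "\<forall>u d. u \<in> N \<longrightarrow> d \<in> N \<longrightarrow> \<not> E u d"
  proof (intro allI impI notI)
    fix u d assume h: "u \<in> N" "d \<in> N" "E u d"
    have "{u,d} \<subseteq> N" using h by auto
    then have "card (N - {u,d}) = card N - card {u,d}" using finN card_Diff_subset
      by (metis finite_subset)
    moreover have "card {u,d} \<le> 2" by (simp add: card_insert_le_m1)
    ultimately have "card (N - {u,d}) \<ge> 2" using cN by linarith
    then obtain a' b' where ab: "a' \<in> N - {u,d}" "b' \<in> N - {u,d}" "a' \<noteq> b'"
      using two_elems by blast
    have "has_subgraph_iso V E D5_V D5_E"
      apply (rule D5_found[OF sg _ _ _ h(3), of v a' b'])
      using h ab irr vN N_def by auto
    then show False using noD by blast
  qed
  define l where "l = card N"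
  obtain h where h: "bij_betw h {1..l} N" using ex_bij_betw_nat_finite_1[OF finN] l_def by blast
  define g where "g = (\<lambda>i. if i = 0 then v else h i)"
  have "bij_betw g {0..l} V"
  proof -
    have e1: "{0..l} = insert 0 {1..l}" by auto
    have "bij_betw g {1..l} N" using h unfolding g_def
      by (rule bij_betw_cong[THEN iffD1, rotated]) auto
    then have "bij_betw g ({1..l} \<union> {0}) (N \<union> {g 0})"
      using vN by (intro notIn_Un_bij_betw) (auto simp: g_def)
    then show ?thesis using e1 Veq by (simp add: g_def)
  qed
  moreover have "\<forall>i\<in>{0..l}. \<forall>j\<in>{0..l}. E (g i) (g j) \<longleftrightarrow> star_E l i j"
  proof (intro ballI)
    fix i j assume ij: "i \<in> {0..l}" "j \<in> {0..l}"
    have hi: "i \<noteq> 0 \<Longrightarrow> h i \<in> N" and hj: "j \<noteq> 0 \<Longrightarrow> h j \<in> N"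
      using h ij bij_betwE by fastforce+
    have il: "i \<le> l" "j \<le> l" using ij by auto
    show "E (g i) (g j) \<longleftrightarrow> star_E l i j"
    proof (cases "i = 0"; cases "j = 0")
      assume "i = 0" "j = 0" then show ?thesis using irr by (simp add: star_E_def g_def)
    next
      assume "i = 0" "j \<noteq> 0" then show ?thesis using hj il N_def by (simp add: star_E_def g_def)
    next
      assume "i \<noteq> 0" "j = 0" then show ?thesis using hi il N_def symE by (auto simp add: star_E_def g_def)
    next
      assume "i \<noteq> 0" "j \<noteq> 0" then show ?thesis using hi hj noin by (simp add: star_E_def g_def)
    qed
  qed
  ultimately have "graph_iso V E (star_V l) (star_E l)"
    unfolding star_V_def by (rule iso_from_enum)
  then show ?thesis using cN l_def by (intro exI[of _ l]) auto
qed


lemma path_cycle_case: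
  assumes sg: "simple_graph V E" and cg: "connected_graph V E"
    and deg: "\<And>v a b c. E v a \<Longrightarrow> E v b \<Longrightarrow> E v c \<Longrightarrow> a = b \<or> a = c \<or> b = c"
  shows "(\<exists>l\<ge>3. graph_iso V E (cycle_V l) (cycle_E l)) \<or> (\<exists>l. graph_iso V E (path_V l) (path_E l))"
proof -
  have fin: "finite V" and sym: "\<And>x y. E x y \<Longrightarrow> E y x" and irr: "\<And>x. \<not>E x x"
    and inV: "\<And>x y. E x y \<Longrightarrow> x\<in>V \<and> y \<in> V" using sg unfolding simple_graph_def by blast+
  have symE: "\<And>x y. E x y \<longleftrightarrow> E y x" using sym by blast
  define P where "P k \<longleftrightarrow> (\<exists>g. inj_on g {0..k} \<and> g ` {0..k} \<subseteq> V \<and> (\<forall>i<k. E (g i) (g (Suc i))))" for k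
  obtain v0 where v0: "v0 \<in> V" using cg unfolding connected_graph_def by blast
  have P0: "P 0" unfolding P_def using v0 by (intro exI[of _ "\<lambda>_. v0"]) auto
  have bound: "\<forall>k. P k \<longrightarrow> k \<le> card V"
  proof (intro allI impI)
    fix k assume "P k"
    then obtain g where "inj_on g {0..k}" "g ` {0..k} \<subseteq> V" unfolding P_def by blast
    then have "card {0..k} \<le> card V" using card_inj_on_le fin by blast
    then show "k \<le> card V" by simp
  qed
  obtain k where Pk: "P k" and mx: "\<forall>y. P y \<longrightarrow> y \<le> k"
    using Nat.ex_has_greatest_nat[OF P0 bound] by blast
  obtain g where gi: "inj_on g {0..k}" and gV: "g ` {0..k} \<subseteq> V" and gE: "\<forall>i<k. E (g i) (g (Suc i))"
    using Pk unfolding P_def by blast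
  have endk: "w \<in> g ` {0..k}" if w: "E (g k) w" for w
  proof (rule ccontr)
    assume nw: "w \<notin> g ` {0..k}"
    define g' where "g' = g(Suc k := w)"
    have "inj_on g' {0..Suc k}" using gi nw unfolding g'_def inj_on_def
      by (auto simp: le_Suc_eq image_iff)
    moreover have "g' ` {0..Suc k} \<subseteq> V" using gV inV[OF w] unfolding g'_def
      by (auto simp: le_Suc_eq)
    moreover have "\<forall>i<Suc k. E (g' i) (g' (Suc i))" using gE w unfolding g'_def
      by (auto simp: less_Suc_eq)
    ultimately have "P (Suc k)" unfolding P_def by blast
    then show False using mx by force
  qed
  have end0: "w \<in> g ` {0..k}" if w: "E (g 0) w" for w
  proof (rule ccontr)
    assume nw: "w \<notin> g ` {0..k}"
    define g' where "g' = (\<lambda>i. if i = 0 then w else g (i - 1))"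
    have "inj_on g' {0..Suc k}" unfolding inj_on_def
    proof (intro ballI impI)
      fix x y assume xy: "x \<in> {0..Suc k}" "y \<in> {0..Suc k}" "g' x = g' y"
      show "x = y"
      proof (cases "x = 0"; cases "y = 0")
        assume "x \<noteq> 0" "y \<noteq> 0"
        then have "g (x - 1) = g (y - 1)" using xy g'_def by simp
        then have "x - 1 = y - 1" using gi xy unfolding inj_on_def by auto
        then show ?thesis using \<open>x \<noteq> 0\<close> \<open>y \<noteq> 0\<close> by simp
      qed (use xy nw g'_def in \<open>auto simp: image_iff\<close>)
    qed
    moreover have "g' ` {0..Suc k} \<subseteq> V" using gV inV[OF w] unfolding g'_def
      by auto
    moreover have "\<forall>i<Suc k. E (g' i) (g' (Suc i))"
    proof (intro allI impI)
      fix i assume "i < Suc k"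
      then show "E (g' i) (g' (Suc i))" using gE symE w unfolding g'_def
        by (cases i) auto
    qed
    ultimately have "P (Suc k)" unfolding P_def by blast
    then show False using mx by force
  qed
  have interior: "w = g (i - 1) \<or> w = g (Suc i)" if i: "0 < i" "i < k" and w: "E (g i) w" for i w
  proof -
    have e1: "E (g i) (g (i - 1))" using gE sym i by (metis Suc_pred' less_imp_diff_less)
    have e2: "E (g i) (g (Suc i))" using gE i by blast
    have "g (i - 1) \<noteq> g (Suc i)" using gi i unfolding inj_on_def by fastforce
    then show ?thesis using deg[OF e1 e2 w] by blast
  qed
  have closed: "w \<in> g ` {0..k}" if x: "x \<in> g ` {0..k}" and w: "E x w" for x w
  proof -
    obtain i where i: "i \<le> k" "x = g i" using x by auto
    show ?thesis
    proof (cases "i = 0 \<or> i = k")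
      case True then show ?thesis using endk end0 w i by blast
    next
      case False
      then have "w = g (i - 1) \<or> w = g (Suc i)" using interior[of i w] i w by simp
      then show ?thesis using False i by auto
    qed
  qed
  have Veq: "V = g ` {0..k}"
  proof
    show "V \<subseteq> g ` {0..k}"
      by (rule closed_all[OF cg, of "g 0"]) (use gV closed in auto)
  qed (use gV in auto)
  have bij: "bij_betw g {0..k} V" using gi Veq unfolding bij_betw_def by blast
  have adj: "j = Suc i \<or> (i = 0 \<and> j = k)"
    if ij: "i \<le> k" "j \<le> k" "i < j" and e: "E (g i) (g j)" for i j
  proof (rule ccontr)
    assume nc: "\<not> (j = Suc i \<or> (i = 0 \<and> j = k))"
    show False
    proof (cases "i = 0")
      case False
      then have "g j = g (i - 1) \<or> g j = g (Suc i)" using interior[of i "g j"] ij e by simp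
      then have "j = i - 1 \<or> j = Suc i" using gi ij unfolding inj_on_def by fastforce
      then show False using nc ij by auto
    next
      case True
      then have jk: "0 < j" "j < k" using nc ij by auto
      then have "g 0 = g (j - 1) \<or> g 0 = g (Suc j)" using interior[of j "g 0"] symE e True by simp
      then have "0 = j - 1 \<or> 0 = Suc j" using gi ij jk unfolding inj_on_def by fastforce
      then show False using nc True jk by auto
    qed
  qed
  have adj2: "j = Suc i \<or> i = Suc j \<or> ((i = 0 \<and> j = k \<or> i = k \<and> j = 0) \<and> E (g 0) (g k))"
    if ij: "i \<le> k" "j \<le> k" and e: "E (g i) (g j)" for i j
  proof -
    have "i \<noteq> j" using e irr by auto
    then consider "i < j" | "j < i" by linarith
    then show ?thesis
    proof cases
      case 1 then show ?thesis using adj[OF ij 1 e] e by auto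
    next
      case 2 then show ?thesis using adj[OF ij(2,1) 2 sym[OF e]] e symE by auto
    qed
  qed
  show ?thesis
  proof (cases "2 \<le> k \<and> E (g 0) (g k)")
    case True
    have md: "(i + 1) mod (Suc k) = (if i = k then 0 else Suc i)" if "i \<le> k" for i
      using that by auto
    have "\<forall>i\<in>{0..<Suc k}. \<forall>j\<in>{0..<Suc k}. E (g i) (g j) \<longleftrightarrow> cycle_E (Suc k) i j"
    proof (intro ballI)
      fix i j assume "i \<in> {0..<Suc k}" "j \<in> {0..<Suc k}"
      then have ij: "i \<le> k" "j \<le> k" by auto
      show "E (g i) (g j) \<longleftrightarrow> cycle_E (Suc k) i j"
      proof
        assume e: "E (g i) (g j)"
        show "cycle_E (Suc k) i j" unfolding cycle_E_def md[OF ij(1)] md[OF ij(2)]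
          using adj2[OF ij e] ij True by auto
      next
        assume "cycle_E (Suc k) i j"
        then have "j = (if i = k then 0 else Suc i) \<or> i = (if j = k then 0 else Suc j)"
          unfolding cycle_E_def md[OF ij(1)] md[OF ij(2)] by simp
        then show "E (g i) (g j)"
        proof
          assume h: "j = (if i = k then 0 else Suc i)"
          show ?thesis
          proof (cases "i = k")
            case True then show ?thesis using h symE \<open>2 \<le> k \<and> E (g 0) (g k)\<close> by simp
          next
            case False then show ?thesis using h gE ij by simp
          qed
        next
          assume h: "i = (if j = k then 0 else Suc j)"
          show ?thesis
          proof (cases "j = k")
            case True then show ?thesis using h \<open>2 \<le> k \<and> E (g 0) (g k)\<close> by simp
          next
            case False then show ?thesis using h gE ij symE by simp
          qed
        qed
      qed
    qed
    moreover have "bij_betw g {0..<Suc k} V" using bij atLeastLessThanSuc_atLeastAtMost by simp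
    ultimately have "graph_iso V E (cycle_V (Suc k)) (cycle_E (Suc k))"
      unfolding cycle_V_def by (intro iso_from_enum) auto
    then show ?thesis using True by (intro disjI1 exI[of _ "Suc k"]) auto
  next
    case False
    have "\<forall>i\<in>{0..k}. \<forall>j\<in>{0..k}. E (g i) (g j) \<longleftrightarrow> path_E k i j"
    proof (intro ballI)
      fix i j assume "i \<in> {0..k}" "j \<in> {0..k}"
      then have ij: "i \<le> k" "j \<le> k" by auto
      show "E (g i) (g j) \<longleftrightarrow> path_E k i j"
      proof
        assume e: "E (g i) (g j)"
        have "i \<noteq> j" using e irr by auto
        then show "path_E k i j" unfolding path_E_def
          using adj2[OF ij e] ij False by auto
      next
        assume "path_E k i j"
        then show "E (g i) (g j)" using gE symE ij unfolding path_E_def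
          by (auto simp: le_less)
      qed
    qed
    then have "graph_iso V E (path_V k) (path_E k)"
      unfolding path_V_def using bij by (intro iso_from_enum) auto
    then show ?thesis by blast
  qed
qed

theorem lemma1:
  fixes V :: "'a set" and E :: "'a \<Rightarrow> 'a \<Rightarrow> bool"
  assumes "simple_graph V E" and "connected_graph V E"
    and "\<not> has_subgraph_iso V E D5_V D5_E"
  shows "(\<exists>l\<ge>3. graph_iso V E (cycle_V l) (cycle_E l))
       \<or> (\<exists>l. graph_iso V E (path_V l) (path_E l))
       \<or> (\<exists>l\<ge>3. graph_iso V E (star_V l) (star_E l))
       \<or> card V = 4"
proof (cases "card V = 4")
  case True then show ?thesis by blast
next
  case c4: False
  show ?thesis
  proof (cases "\<exists>v a b c. E v a \<and> E v b \<and> E v c \<and> a \<noteq> b \<and> a \<noteq> c \<and> b \<noteq> c")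
    case True
    then obtain v a b c where h: "E v a" "E v b" "E v c" "a \<noteq> b" "a \<noteq> c" "b \<noteq> c" by blast
    have "\<exists>l\<ge>3. graph_iso V E (star_V l) (star_E l)"
      by (rule star_case[OF assms(1,2) c4 assms(3) h])
    then show ?thesis by blast
  next
    case False
    then have deg: "\<And>v a b c. E v a \<Longrightarrow> E v b \<Longrightarrow> E v c \<Longrightarrow> a = b \<or> a = c \<or> b = c" by blast
    have "(\<exists>l\<ge>3. graph_iso V E (cycle_V l) (cycle_E l)) \<or> (\<exists>l. graph_iso V E (path_V l) (path_E l))"
      by (rule path_cycle_case[OF assms(1,2) deg])
    then show ?thesis by blast
  qed
qed

end
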